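(* Let $B$ be a commutative ring with identity and $A$ a dense subring of $B$. Then the map $\Theta:\min(B)\to\min(A)$, $\Theta(P)=P\cap A$, is a homeomorphism; in particular $\min(A)$ is homeomorphic to $\min(B)$.
   Context: All rings are commutative with identity; subrings contain the identity. For a ring $R$, $\min(R)$ denotes the set of minimal prime ideals of $R$ with the subspace topology induced from the Zariski topology on $\operatorname{spec} R$. A subring $A$ of $B$ is dense in $B$ if for every ideal $I$ of $B$ and every $b\in B\setminus \operatorname{rad}(I)$ there exists $a\in B\setminus\operatorname{rad}(I)$ with $ab\in A$. *)

theory Defs
  imports "HOL-Analysis.Analysis"
begin

text \<open>Rings are carrier sets inside a commutative ring type; the ambient ring B is
  taken to be the whole type (UNIV), and subrings are subsets containing 1.\<close>

definition subring_of :: "'a::comm_ring_1 set \<Rightarrow> bool" where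
  "subring_of R \<longleftrightarrow> 1 \<in> R \<and> (\<forall>x\<in>R. \<forall>y\<in>R. x + y \<in> R \<and> x * y \<in> R) \<and> (\<forall>x\<in>R. - x \<in> R)"

definition ideal_of :: "'a::comm_ring_1 set \<Rightarrow> 'a set \<Rightarrow> bool" where
  "ideal_of R I \<longleftrightarrow> I \<subseteq> R \<and> 0 \<in> I \<and> (\<forall>x\<in>I. \<forall>y\<in>I. x + y \<in> I)
     \<and> (\<forall>x\<in>I. - x \<in> I) \<and> (\<forall>r\<in>R. \<forall>x\<in>I. r * x \<in> I)"

definition prime_ideal_of :: "'a::comm_ring_1 set \<Rightarrow> 'a set \<Rightarrow> bool" where
  "prime_ideal_of R P \<longleftrightarrow> ideal_of R P \<and> P \<noteq> R
     \<and> (\<forall>x\<in>R. \<forall>y\<in>R. x * y \<in> P \<longrightarrow> x \<in> P \<or> y \<in> P)"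

definition spec :: "'a::comm_ring_1 set \<Rightarrow> 'a set set" where
  "spec R = {P. prime_ideal_of R P}"

definition zar_V :: "'a::comm_ring_1 set \<Rightarrow> 'a set \<Rightarrow> 'a set set" where
  "zar_V R S = {P \<in> spec R. S \<subseteq> P}"

definition zariski :: "'a::comm_ring_1 set \<Rightarrow> 'a set topology" where
  "zariski R = topology_generated_by {spec R - zar_V R S | S. S \<subseteq> R}"

definition min_primes :: "'a::comm_ring_1 set \<Rightarrow> 'a set set" where
  "min_primes R = {P \<in> spec R. \<forall>Q\<in>spec R. Q \<subseteq> P \<longrightarrow> Q = P}"

definition min_top :: "'a::comm_ring_1 set \<Rightarrow> 'a set topology" where
  "min_top R = subtopology (zariski R) (min_primes R)"

definition radical_of :: "'a::comm_ring_1 set \<Rightarrow> 'a set \<Rightarrow> 'a set" where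
  "radical_of R I = {x \<in> R. \<exists>n::nat. x ^ n \<in> I}"

definition dense_subring :: "'a::comm_ring_1 set \<Rightarrow> 'a set \<Rightarrow> bool" where
  "dense_subring A B \<longleftrightarrow> subring_of A \<and> subring_of B \<and> A \<subseteq> B \<and>
     (\<forall>I. ideal_of B I \<longrightarrow> (\<forall>b \<in> B - radical_of B I. \<exists>a \<in> B - radical_of B I. a * b \<in> A))"

end

theory Submission
  imports Defs
begin



lemma prime_one_notin:
  assumes "subring_of R" "prime_ideal_of R P" shows "1 \<notin> P"
proof
  assume "1 \<in> P"
  then have "R \<subseteq> P" using assms unfolding prime_ideal_of_def ideal_of_def
    by (metis mult.right_neutral subsetI)
  then show False using assms unfolding prime_ideal_of_def ideal_of_def by blast
qed

lemma prime_mult_notin: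
  assumes "prime_ideal_of R P" "x \<in> R" "y \<in> R" "x \<notin> P" "y \<notin> P" shows "x * y \<notin> P"
  using assms unfolding prime_ideal_of_def by blast

lemma prime_power:
  assumes "subring_of R" "prime_ideal_of R P" "x \<in> R" "x ^ n \<in> P" shows "x \<in> P"
  using assms(4)
proof (induction n)
  case 0 then show ?case using prime_one_notin[OF assms(1,2)] by simp
next
  case (Suc n)
  have "x ^ n \<in> R"
  proof (induction n)
    case 0 then show ?case using assms(1) by (simp add: subring_of_def)
  next
    case (Suc n) then show ?case using assms(1,3) by (simp add: subring_of_def)
  qed
  then show ?case using Suc assms(2,3) unfolding prime_ideal_of_def by auto
qed

lemma subring_UNIV: "subring_of (UNIV::'a::comm_ring_1 set)"
  by (simp add: subring_of_def)

lemma radical_prime: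
  assumes "prime_ideal_of (UNIV::'a::comm_ring_1 set) P" shows "radical_of UNIV P = P"
  unfolding radical_of_def using prime_power[OF subring_UNIV assms]
  by (auto intro: exI[of _ 1])

lemma contract_prime:
  assumes "subring_of A" "prime_ideal_of (UNIV::'a::comm_ring_1 set) P"
  shows "prime_ideal_of A (P \<inter> A)"
proof -
  have "1 \<notin> P" using prime_one_notin[OF subring_UNIV assms(2)] .
  moreover have "1 \<in> A" using assms(1) by (simp add: subring_of_def)
  moreover have "0 \<in> A" using assms(1) unfolding subring_of_def
    by (metis add.right_inverse)
  ultimately show ?thesis using assms unfolding prime_ideal_of_def ideal_of_def subring_of_def
    by auto
qed

lemma krull:
  fixes S :: "'a::comm_ring_1 set"
  assumes S1: "1 \<in> S" and Sm: "\<forall>x\<in>S. \<forall>y\<in>S. x * y \<in> S" and S0: "0 \<notin> S"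
  shows "\<exists>P. prime_ideal_of UNIV P \<and> P \<inter> S = {}"
proof -
  define F where "F = {I. ideal_of (UNIV::'a set) I \<and> I \<inter> S = {}}"
  have "\<forall>C\<in>chains F. \<exists>U\<in>F. \<forall>X\<in>C. X \<subseteq> U"
  proof
    fix C assume C: "C \<in> chains F"
    show "\<exists>U\<in>F. \<forall>X\<in>C. X \<subseteq> U"
    proof (cases "C = {}")
      case True
      have "{0} \<in> F" using S0 by (auto simp: F_def ideal_of_def)
      then show ?thesis using True by blast
    next
      case False
      have CF: "C \<subseteq> F" and ch: "\<forall>X\<in>C. \<forall>Y\<in>C. X \<subseteq> Y \<or> Y \<subseteq> X"
        using C unfolding chains_def chain_subset_def by auto
      have "ideal_of UNIV (\<Union>C)"
        unfolding ideal_of_def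
      proof (intro conjI ballI)
        show "0 \<in> \<Union>C" using False CF by (auto simp: F_def ideal_of_def)
      next
        fix x y assume "x \<in> \<Union>C" "y \<in> \<Union>C"
        then obtain X Y where XY: "X \<in> C" "Y \<in> C" "x \<in> X" "y \<in> Y" by blast
        show "x + y \<in> \<Union>C"
        proof (cases "X \<subseteq> Y")
          case True
          have "Y \<in> F" using XY CF by blast
          then have "x + y \<in> Y" using True XY unfolding F_def ideal_of_def by blast
          then show ?thesis using XY by blast
        next
          case False then have "Y \<subseteq> X" using ch XY by blast
          have "X \<in> F" using XY CF by blast
          then have "x + y \<in> X" using \<open>Y \<subseteq> X\<close> XY unfolding F_def ideal_of_def by blast
          then show ?thesis using XY by blast
        qed
      next
        fix x assume "x \<in> \<Union>C"
        then obtain X where "X \<in> C" "x \<in> X" by blast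
        moreover then have "X \<in> F" using CF by blast
        ultimately show "- x \<in> \<Union>C" unfolding F_def ideal_of_def by blast
      next
        fix r x assume "x \<in> \<Union>C"
        then obtain X where "X \<in> C" "x \<in> X" by blast
        moreover then have "X \<in> F" using CF by blast
        ultimately show "r * x \<in> \<Union>C" unfolding F_def ideal_of_def by blast
      qed auto
      moreover have "\<Union>C \<inter> S = {}" using CF by (auto simp: F_def)
      ultimately show ?thesis by (auto simp: F_def)
    qed
  qed
  from Zorn_Lemma2[OF this] obtain M where MF: "M \<in> F" and Mmax: "\<forall>X\<in>F. M \<subseteq> X \<longrightarrow> X = M"
    by blast
  have Mi: "ideal_of UNIV M" and MS: "M \<inter> S = {}" using MF by (auto simp: F_def)
  define ext where "ext x = {m + r * x | m r. m \<in> M}" for x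
  have ext_ideal: "ideal_of UNIV (ext x)" for x
    unfolding ideal_of_def ext_def
  proof (intro conjI ballI allI)
    show "0 \<in> {m + r * x |m r. m \<in> M}" using Mi by (auto simp: ideal_of_def intro!: exI[of _ 0])
  next
    fix a b assume "a \<in> {m + r * x |m r. m \<in> M}" "b \<in> {m + r * x |m r. m \<in> M}"
    then obtain m1 r1 m2 r2 where "a = m1 + r1 * x" "b = m2 + r2 * x" "m1 \<in> M" "m2 \<in> M" by blast
    moreover then have "a + b = (m1 + m2) + (r1 + r2) * x" "m1 + m2 \<in> M" using Mi unfolding ideal_of_def
      by (auto simp: algebra_simps)
    ultimately show "a + b \<in> {m + r * x |m r. m \<in> M}" by blast
  next
    fix a assume "a \<in> {m + r * x |m r. m \<in> M}"
    then obtain m1 r1 where "a = m1 + r1 * x" "m1 \<in> M" by blast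
    moreover then have "- a = (- m1) + (- r1) * x" "- m1 \<in> M" using Mi unfolding ideal_of_def
      by (auto simp: algebra_simps)
    ultimately show "- a \<in> {m + r * x |m r. m \<in> M}" by blast
  next
    fix c a assume "a \<in> {m + r * x |m r. m \<in> M}"
    then obtain m1 r1 where "a = m1 + r1 * x" "m1 \<in> M" by blast
    moreover then have "c * a = (c * m1) + (c * r1) * x" "c * m1 \<in> M" using Mi unfolding ideal_of_def
      by (auto simp: algebra_simps)
    ultimately show "c * a \<in> {m + r * x |m r. m \<in> M}" by blast
  qed auto
  have ext_meets: "\<exists>m r. m \<in> M \<and> m + r * x \<in> S" if "x \<notin> M" for x
  proof -
    have "M \<subseteq> ext x" unfolding ext_def by (force intro: exI[of _ 0])
    moreover have "x = 0 + 1 * x" "(0::'a) \<in> M" using Mi unfolding ideal_of_def by auto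
    then have "x \<in> ext x" unfolding ext_def by blast
    ultimately have "ext x \<notin> F" using Mmax that by blast
    then have "ext x \<inter> S \<noteq> {}" using ext_ideal by (auto simp: F_def)
    then show ?thesis unfolding ext_def by blast
  qed
  have "prime_ideal_of UNIV M"
    unfolding prime_ideal_of_def
  proof (intro conjI ballI impI Mi)
    show "M \<noteq> UNIV" using MS S1 by blast
  next
    fix x y assume xy: "x * y \<in> M"
    show "x \<in> M \<or> y \<in> M"
    proof (rule ccontr)
      assume "\<not> (x \<in> M \<or> y \<in> M)"
      then obtain m1 r1 m2 r2 where h: "m1 \<in> M" "m1 + r1 * x \<in> S" "m2 \<in> M" "m2 + r2 * y \<in> S"
        using ext_meets by meson
      have "(m1 + r1 * x) * (m2 + r2 * y) = m1 * (m2 + r2 * y) + m2 * (r1 * x) + (r1 * r2) * (x * y)"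
        by (simp add: algebra_simps)
      moreover have "\<dots> \<in> M"
      proof -
        have "(m2 + r2 * y) * m1 \<in> M" "(r1 * x) * m2 \<in> M" "(r1 * r2) * (x * y) \<in> M"
          using Mi h xy unfolding ideal_of_def by blast+
        then have "m1 * (m2 + r2 * y) \<in> M" "m2 * (r1 * x) \<in> M" "(r1 * r2) * (x * y) \<in> M"
          by (simp_all only: mult.commute)
        then show ?thesis using Mi unfolding ideal_of_def by blast
      qed
      moreover have "(m1 + r1 * x) * (m2 + r2 * y) \<in> S" using Sm h by blast
      ultimately show False using MS by auto
    qed
  qed
  then show ?thesis using MS by blast
qed




lemma pU:
  assumes "prime_ideal_of (UNIV::'a::comm_ring_1 set) Q"
  shows "0 \<in> Q" "x \<in> Q \<Longrightarrow> y \<in> Q \<Longrightarrow> x + y \<in> Q" "x \<in> Q \<Longrightarrow> - x \<in> Q"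
    "x \<in> Q \<Longrightarrow> r * x \<in> Q" "x * y \<in> Q \<Longrightarrow> x \<in> Q \<or> y \<in> Q" "1 \<notin> Q"
  using assms prime_one_notin[OF subring_UNIV assms] unfolding prime_ideal_of_def ideal_of_def
  by blast+

lemma min_below:
  fixes P :: "'a::comm_ring_1 set"
  assumes P: "prime_ideal_of UNIV P"
  shows "\<exists>Q\<in>min_primes UNIV. Q \<subseteq> P"
proof -
  define F where "F = uminus ` {Q. prime_ideal_of (UNIV::'a set) Q \<and> Q \<subseteq> P}"
  have "\<forall>C\<in>chains F. \<exists>U\<in>F. \<forall>X\<in>C. X \<subseteq> U"
  proof
    fix C assume C: "C \<in> chains F"
    show "\<exists>U\<in>F. \<forall>X\<in>C. X \<subseteq> U"
    proof (cases "C = {}")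
      case True
      have "- P \<in> F" unfolding F_def using P by (intro imageI) simp
      then show ?thesis using True by blast
    next
      case False
      have CF: "C \<subseteq> F" and ch: "\<forall>X\<in>C. \<forall>Y\<in>C. X \<subseteq> Y \<or> Y \<subseteq> X"
        using C unfolding chains_def chain_subset_def by auto
      have Cp: "prime_ideal_of UNIV (- X) \<and> - X \<subseteq> P" if "X \<in> C" for X
      proof -
        have "X \<in> F" using that CF by blast
        then obtain Q where "X = - Q" "prime_ideal_of UNIV Q" "Q \<subseteq> P" unfolding F_def by (elim imageE) simp
        then show ?thesis by simp
      qed
      define I where "I = (\<Inter>X\<in>C. - X)"
      have I_mem: "x \<in> I \<longleftrightarrow> (\<forall>X\<in>C. x \<in> - X)" for x unfolding I_def by blast
      have "prime_ideal_of UNIV I"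
        unfolding prime_ideal_of_def ideal_of_def
      proof (intro conjI ballI allI impI)
        show "0 \<in> I" using Cp pU(1) unfolding I_mem by blast
      next
        fix x y assume xy: "x \<in> I" "y \<in> I"
        show "x + y \<in> I" unfolding I_mem
        proof
          fix X assume X: "X \<in> C"
          have "x \<in> - X" "y \<in> - X" using xy X I_mem by blast+
          then show "x + y \<in> - X" using pU(2)[OF conjunct1[OF Cp[OF X]]] by blast
        qed
      next
        fix x assume "x \<in> I" then show "- x \<in> I"
          using Cp pU(3) unfolding I_mem by blast
      next
        fix r x assume "x \<in> I" then show "r * x \<in> I"
          using Cp pU(4) unfolding I_mem by blast
      next
        obtain X where "X \<in> C" using False by blast
        then have "1 \<notin> - X" using pU(6)[OF conjunct1[OF Cp]] by blast
        then have "1 \<notin> I" unfolding I_mem using \<open>X \<in> C\<close> by blast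
        then show "I \<noteq> UNIV" by blast
      next
        fix x y assume xy: "x * y \<in> I"
        show "x \<in> I \<or> y \<in> I"
        proof (rule ccontr)
          assume "\<not> (x \<in> I \<or> y \<in> I)"
          then have "x \<notin> I" "y \<notin> I" by blast+
          then obtain X1 X2 where X: "X1 \<in> C" "X2 \<in> C" "x \<notin> - X1" "y \<notin> - X2" unfolding I_mem by blast
          have xyX: "x * y \<in> - X1" "x * y \<in> - X2" using xy X(1,2) unfolding I_mem by blast+
          show False
          proof (cases "X1 \<subseteq> X2")
            case True
            then have "x \<notin> - X2" using X by blast
            then show False using pU(5)[OF conjunct1[OF Cp[OF X(2)]] xyX(2)] X by blast
          next
            case False
            then have "X2 \<subseteq> X1" using ch X by blast
            then have "y \<notin> - X1" using X by blast
            then show False using pU(5)[OF conjunct1[OF Cp[OF X(1)]] xyX(1)] X by blast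
          qed
        qed
      qed simp
      moreover have "I \<subseteq> P" using False Cp I_mem by blast
      ultimately have "- I \<in> F" unfolding F_def by (intro imageI) simp
      moreover have "\<forall>X\<in>C. X \<subseteq> - I" using I_mem by blast
      ultimately show ?thesis by blast
    qed
  qed
  from Zorn_Lemma2[OF this] obtain M where MF: "M \<in> F" and Mmax: "\<forall>X\<in>F. M \<subseteq> X \<longrightarrow> X = M"
    by blast
  obtain Q where Q: "M = - Q" "prime_ideal_of UNIV Q" "Q \<subseteq> P" using MF unfolding F_def by (elim imageE) simp
  have "Q \<in> min_primes UNIV"
    unfolding min_primes_def spec_def
  proof (intro CollectI conjI ballI impI)
    show "prime_ideal_of UNIV Q" by fact
  next
    fix Q' assume "Q' \<in> {P. prime_ideal_of UNIV P}" "Q' \<subseteq> Q"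
    then have "- Q' \<in> F" "M \<subseteq> - Q'" using Q unfolding F_def by (auto intro!: imageI)
    then have "- Q' = - Q" using Mmax Q by blast
    then show "Q' = Q" by simp
  qed
  then show ?thesis using Q by blast
qed




lemma pA:
  assumes "subring_of A" "prime_ideal_of A Q"
  shows "Q \<subseteq> A" "0 \<in> Q" "x \<in> A \<Longrightarrow> y \<in> A \<Longrightarrow> x * y \<in> Q \<Longrightarrow> x \<in> Q \<or> y \<in> Q" "1 \<notin> Q"
    "x \<in> A \<Longrightarrow> y \<in> A \<Longrightarrow> x * y \<in> A" "1 \<in> A"
proof -
  show "Q \<subseteq> A" "0 \<in> Q" using assms(2) unfolding prime_ideal_of_def ideal_of_def by blast+
  show "x \<in> A \<Longrightarrow> y \<in> A \<Longrightarrow> x * y \<in> Q \<Longrightarrow> x \<in> Q \<or> y \<in> Q"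
    using assms(2) unfolding prime_ideal_of_def by blast
  show "1 \<notin> Q" using prime_one_notin[OF assms] .
  show "x \<in> A \<Longrightarrow> y \<in> A \<Longrightarrow> x * y \<in> A" "1 \<in> A" using assms(1) unfolding subring_of_def by blast+
qed

lemma dense_sub: "dense_subring A UNIV \<Longrightarrow> subring_of A"
  unfolding dense_subring_def by blast

lemma dense_prime:
  assumes d: "dense_subring A UNIV" and P: "prime_ideal_of UNIV P" and b: "b \<notin> P"
  shows "\<exists>a. a \<notin> P \<and> a * b \<in> A"
proof -
  have I: "ideal_of UNIV P" using P unfolding prime_ideal_of_def by blast
  have "b \<in> UNIV - radical_of UNIV P" using b radical_prime[OF P] by simp
  then obtain a where "a \<in> UNIV - radical_of UNIV P" "a * b \<in> A"
    using d I unfolding dense_subring_def by blast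
  then show ?thesis using radical_prime[OF P] by auto
qed

lemma minU: "P \<in> min_primes UNIV \<Longrightarrow> prime_ideal_of UNIV P"
  "P \<in> min_primes UNIV \<Longrightarrow> prime_ideal_of UNIV Q \<Longrightarrow> Q \<subseteq> P \<Longrightarrow> Q = P"
  unfolding min_primes_def spec_def by blast+

lemma contract_min:
  assumes d: "dense_subring A UNIV" and Pm: "P \<in> min_primes UNIV"
  shows "P \<inter> A \<in> min_primes A"
proof -
  have sA: "subring_of A" using dense_sub[OF d] .
  have P: "prime_ideal_of UNIV P" using minU(1)[OF Pm] .
  have PA: "prime_ideal_of A (P \<inter> A)" using contract_prime[OF sA P] .
  have "Q = P \<inter> A" if Qs: "prime_ideal_of A Q" and QP: "Q \<subseteq> P \<inter> A" for Q
  proof (rule ccontr)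
    assume ne: "Q \<noteq> P \<inter> A"
    then obtain x where x: "x \<in> P" "x \<in> A" "x \<notin> Q" using QP by blast
    define S where "S = {s * t | s t. s \<in> A \<and> s \<notin> Q \<and> t \<notin> P}"
    have S1: "1 \<in> S"
    proof -
      have "(1::'a) = 1 * 1" by simp
      moreover have "(1::'a) \<in> A" "(1::'a) \<notin> Q" "(1::'a) \<notin> P"
        using pA(6)[OF sA Qs] pA(4)[OF sA Qs] pU(6)[OF P] by auto
      ultimately show ?thesis unfolding S_def by blast
    qed
    have Sm: "\<forall>u\<in>S. \<forall>v\<in>S. u * v \<in> S"
    proof (intro ballI)
      fix u v assume "u \<in> S" "v \<in> S"
      then obtain s1 t1 s2 t2 where h: "u = s1 * t1" "s1 \<in> A" "s1 \<notin> Q" "t1 \<notin> P"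
        "v = s2 * t2" "s2 \<in> A" "s2 \<notin> Q" "t2 \<notin> P" unfolding S_def by blast
      have "u * v = (s1 * s2) * (t1 * t2)" using h by (simp add: algebra_simps)
      moreover have "s1 * s2 \<in> A" using h pA(5)[OF sA Qs] by blast
      moreover have "s1 * s2 \<notin> Q" using h pA(3)[OF sA Qs] by blast
      moreover have "t1 * t2 \<notin> P" using h pU(5)[OF P] by blast
      ultimately show "u * v \<in> S" unfolding S_def by blast
    qed
    have S0: "0 \<notin> S"
    proof
      assume "0 \<in> S"
      then obtain s t where h: "0 = s * t" "s \<in> A" "s \<notin> Q" "t \<notin> P" unfolding S_def by blast
      obtain a where a: "a \<notin> P" "a * t \<in> A" using dense_prime[OF d P h(4)] by blast
      have atP: "a * t \<notin> P" using pU(5)[OF P] a h by blast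
      have "s * (a * t) = a * (s * t)" by (simp add: algebra_simps)
      also have "\<dots> = 0" using h by simp
      finally have "s * (a * t) \<in> Q" using pA(2)[OF sA Qs] by simp
      then have "s \<in> Q \<or> a * t \<in> Q" using pA(3)[OF sA Qs] h a by blast
      then show False using h atP QP by blast
    qed
    obtain P2 where P2: "prime_ideal_of UNIV P2" "P2 \<inter> S = {}" using krull[OF S1 Sm S0] by blast
    have "P2 \<subseteq> P"
    proof
      fix y assume y: "y \<in> P2"
      show "y \<in> P"
      proof (rule ccontr)
        assume "y \<notin> P"
        then have "1 * y \<in> S" using S1 unfolding S_def
          using pA(6)[OF sA Qs] pA(4)[OF sA Qs] by blast
        then show False using y P2 by auto
      qed
    qed
    then have "P2 = P" using minU(2)[OF Pm P2(1)] by blast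
    moreover have "x * 1 \<in> S" using x pU(6)[OF P] unfolding S_def by blast
    ultimately show False using x P2 by auto
  qed
  then show ?thesis using PA unfolding min_primes_def spec_def by blast
qed

lemma contract_inj:
  assumes d: "dense_subring A UNIV" and P1m: "P1 \<in> min_primes UNIV" and P2m: "P2 \<in> min_primes UNIV"
    and eq: "P1 \<inter> A = P2 \<inter> A"
  shows "P1 = P2"
proof -
  have P1: "prime_ideal_of UNIV P1" using minU(1)[OF P1m] .
  have P2: "prime_ideal_of UNIV P2" using minU(1)[OF P2m] .
  define S where "S = {s * t | s t. s \<notin> P1 \<and> t \<notin> P2}"
  have S1: "1 \<in> S"
  proof -
    have "(1::'a) = 1 * 1" by simp
    then show ?thesis unfolding S_def using pU(6)[OF P1] pU(6)[OF P2] by blast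
  qed
  have Sm: "\<forall>u\<in>S. \<forall>v\<in>S. u * v \<in> S"
  proof (intro ballI)
    fix u v assume "u \<in> S" "v \<in> S"
    then obtain s1 t1 s2 t2 where h: "u = s1 * t1" "s1 \<notin> P1" "t1 \<notin> P2"
      "v = s2 * t2" "s2 \<notin> P1" "t2 \<notin> P2" unfolding S_def by blast
    have "u * v = (s1 * s2) * (t1 * t2)" using h by (simp add: algebra_simps)
    moreover have "s1 * s2 \<notin> P1" using h pU(5)[OF P1] by blast
    moreover have "t1 * t2 \<notin> P2" using h pU(5)[OF P2] by blast
    ultimately show "u * v \<in> S" unfolding S_def by blast
  qed
  have S0: "0 \<notin> S"
  proof
    assume "0 \<in> S"
    then obtain s t where h: "0 = s * t" "s \<notin> P1" "t \<notin> P2" unfolding S_def by blast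
    obtain a where a: "a \<notin> P1" "a * s \<in> A" using dense_prime[OF d P1 h(2)] by blast
    have "a * s \<notin> P1" using pU(5)[OF P1] a h by blast
    then have asP2: "a * s \<notin> P2" using a eq by blast
    have "(a * s) * t = a * (s * t)" by (simp add: algebra_simps)
    also have "\<dots> = 0" using h by simp
    finally have "(a * s) * t \<in> P2" using pU(1)[OF P2] by simp
    then show False using pU(5)[OF P2] asP2 h by blast
  qed
  obtain Q where Q: "prime_ideal_of UNIV Q" "Q \<inter> S = {}" using krull[OF S1 Sm S0] by blast
  have "Q \<subseteq> P1"
  proof
    fix y assume y: "y \<in> Q"
    show "y \<in> P1"
    proof (rule ccontr)
      assume "y \<notin> P1"
      then have "y * 1 \<in> S" using pU(6)[OF P2] unfolding S_def by blast
      then show False using y Q by auto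
    qed
  qed
  moreover have "Q \<subseteq> P2"
  proof
    fix y assume y: "y \<in> Q"
    show "y \<in> P2"
    proof (rule ccontr)
      assume "y \<notin> P2"
      then have "1 * y \<in> S" using pU(6)[OF P1] unfolding S_def by blast
      then show False using y Q by auto
    qed
  qed
  ultimately show ?thesis using minU(2)[OF P1m Q(1)] minU(2)[OF P2m Q(1)] by simp
qed

lemma contract_surj:
  assumes d: "dense_subring A UNIV" and Qm: "Q \<in> min_primes A"
  shows "\<exists>P\<in>min_primes UNIV. P \<inter> A = Q"
proof -
  have sA: "subring_of A" using dense_sub[OF d] .
  have Qs: "prime_ideal_of A Q" and Qmin: "\<And>Q'. prime_ideal_of A Q' \<Longrightarrow> Q' \<subseteq> Q \<Longrightarrow> Q' = Q"
    using Qm unfolding min_primes_def spec_def by blast+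
  define S where "S = A - Q"
  have S1: "1 \<in> S" using pA(6)[OF sA Qs] pA(4)[OF sA Qs] unfolding S_def by blast
  have Sm: "\<forall>u\<in>S. \<forall>v\<in>S. u * v \<in> S"
    using pA(5)[OF sA Qs] pA(3)[OF sA Qs] unfolding S_def by blast
  have S0: "0 \<notin> S" using pA(2)[OF sA Qs] unfolding S_def by blast
  obtain P' where P': "prime_ideal_of UNIV P'" "P' \<inter> S = {}" using krull[OF S1 Sm S0] by blast
  obtain P where P: "P \<in> min_primes UNIV" "P \<subseteq> P'" using min_below[OF P'(1)] by blast
  have "prime_ideal_of A (P \<inter> A)" using contract_prime[OF sA minU(1)[OF P(1)]] .
  moreover have "P \<inter> A \<subseteq> Q" using P P' unfolding S_def by blast
  ultimately have "P \<inter> A = Q" using Qmin by blast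
  then show ?thesis using P by blast
qed




lemma topspace_zariski: "topspace (zariski R) = spec R"
proof -
  have "zar_V R R = {}" unfolding zar_V_def spec_def prime_ideal_of_def ideal_of_def by blast
  then have "spec R \<in> {spec R - zar_V R S | S. S \<subseteq> R}" by (metis (mono_tags, lifting) Diff_empty mem_Collect_eq order_refl)
  then show ?thesis unfolding zariski_def topology_generated_by_topspace by blast
qed

lemma topspace_min: "topspace (min_top R) = min_primes R"
  unfolding min_top_def topspace_subtopology topspace_zariski min_primes_def by blast

lemma basic_open:
  assumes "c \<in> R" shows "openin (zariski R) {Q \<in> spec R. c \<notin> Q}"
proof -
  have eq: "{Q \<in> spec R. c \<notin> Q} = spec R - zar_V R {c}" unfolding zar_V_def by blast
  have mem: "spec R - zar_V R {c} \<in> {spec R - zar_V R S | S. S \<subseteq> R}"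
    by (intro CollectI exI[of _ "{c}"]) (simp add: assms)
  show ?thesis unfolding eq zariski_def openin_topology_generated_by_iff
    by (rule generate_topology_on.Basis[OF mem])
qed

lemma nbhd_gen:
  assumes sR: "subring_of R" and g: "generate_topology_on {spec R - zar_V R S | S. S \<subseteq> R} W"
  shows "\<forall>Q\<in>W \<inter> spec R. \<exists>c\<in>R. c \<notin> Q \<and> (\<forall>Q'\<in>spec R. c \<notin> Q' \<longrightarrow> Q' \<in> W)"
  using g
proof (induction rule: generate_topology_on.induct)
  case Empty
  then show ?case by blast
next
  case (Int a b)
  show ?case
  proof
    fix Q assume Q: "Q \<in> a \<inter> b \<inter> spec R"
    obtain c1 where c1: "c1 \<in> R" "c1 \<notin> Q" "\<forall>Q'\<in>spec R. c1 \<notin> Q' \<longrightarrow> Q' \<in> a" using Int.IH(1) Q by blast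
    obtain c2 where c2: "c2 \<in> R" "c2 \<notin> Q" "\<forall>Q'\<in>spec R. c2 \<notin> Q' \<longrightarrow> Q' \<in> b" using Int.IH(2) Q by blast
    have Qp: "prime_ideal_of R Q" using Q unfolding spec_def by blast
    have "c1 * c2 \<in> R" using sR c1 c2 unfolding subring_of_def by blast
    moreover have "c1 * c2 \<notin> Q" using Qp c1 c2 unfolding prime_ideal_of_def by blast
    moreover have "\<forall>Q'\<in>spec R. c1 * c2 \<notin> Q' \<longrightarrow> Q' \<in> a \<inter> b"
    proof (intro ballI impI)
      fix Q' assume Q': "Q' \<in> spec R" "c1 * c2 \<notin> Q'"
      have I: "\<forall>r\<in>R. \<forall>x\<in>Q'. r * x \<in> Q'" using Q' unfolding spec_def prime_ideal_of_def ideal_of_def by blast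
      have "c1 \<notin> Q'"
      proof
        assume "c1 \<in> Q'" then have "c2 * c1 \<in> Q'" using I c2 by blast
        then show False using Q' by (simp add: mult.commute)
      qed
      moreover have "c2 \<notin> Q'"
      proof
        assume "c2 \<in> Q'" then have "c1 * c2 \<in> Q'" using I c1 by blast
        then show False using Q' by simp
      qed
      ultimately show "Q' \<in> a \<inter> b" using c1 c2 Q' by blast
    qed
    ultimately show "\<exists>c\<in>R. c \<notin> Q \<and> (\<forall>Q'\<in>spec R. c \<notin> Q' \<longrightarrow> Q' \<in> a \<inter> b)" by blast
  qed
next
  case (UN K)
  show ?case
  proof
    fix Q assume "Q \<in> \<Union>K \<inter> spec R"
    then obtain k where k: "k \<in> K" "Q \<in> k \<inter> spec R" by blast
    then obtain c where "c \<in> R" "c \<notin> Q" "\<forall>Q'\<in>spec R. c \<notin> Q' \<longrightarrow> Q' \<in> k" using UN.IH by blast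
    then show "\<exists>c\<in>R. c \<notin> Q \<and> (\<forall>Q'\<in>spec R. c \<notin> Q' \<longrightarrow> Q' \<in> \<Union>K)" using k by blast
  qed
next
  case (Basis s)
  then obtain S where S: "s = spec R - zar_V R S" "S \<subseteq> R" by blast
  show ?case
  proof
    fix Q assume "Q \<in> s \<inter> spec R"
    then have "\<not> S \<subseteq> Q" using S unfolding zar_V_def by blast
    then obtain c where c: "c \<in> S" "c \<notin> Q" by blast
    have "\<forall>Q'\<in>spec R. c \<notin> Q' \<longrightarrow> Q' \<in> s" using S c unfolding zar_V_def by blast
    then show "\<exists>c\<in>R. c \<notin> Q \<and> (\<forall>Q'\<in>spec R. c \<notin> Q' \<longrightarrow> Q' \<in> s)" using c S by blast
  qed
qed

lemma nbhd:
  assumes sR: "subring_of R" and W: "openin (zariski R) W" and Q: "Q \<in> W"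
  shows "\<exists>c\<in>R. c \<notin> Q \<and> (\<forall>Q'\<in>spec R. c \<notin> Q' \<longrightarrow> Q' \<in> W)"
proof -
  have "W \<subseteq> spec R" using openin_subset[OF W] topspace_zariski by blast
  moreover have "generate_topology_on {spec R - zar_V R S | S. S \<subseteq> R} W"
    using W unfolding zariski_def openin_topology_generated_by_iff .
  ultimately show ?thesis using nbhd_gen[OF sR] Q by blast
qed




lemma minU_spec: "P \<in> min_primes R \<Longrightarrow> P \<in> spec R"
  unfolding min_primes_def by blast

theorem mainTheorem7:
  fixes A :: "'a::comm_ring_1 set"
  assumes "dense_subring A (UNIV :: 'a set)"
  shows "homeomorphic_map (min_top (UNIV :: 'a set)) (min_top A) (\<lambda>P. P \<inter> A)"
proof (rule bijective_open_imp_homeomorphic_map)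
  note d = assms
  have sA: "subring_of A" using dense_sub[OF d] .
  have cz: "continuous_map (zariski (UNIV::'a set)) (zariski A) (\<lambda>P. P \<inter> A)"
    unfolding continuous_map_def
  proof (intro conjI allI impI)
    show "(\<lambda>P. P \<inter> A) \<in> topspace (zariski UNIV) \<rightarrow> topspace (zariski A)"
      unfolding topspace_zariski using contract_prime[OF sA] unfolding spec_def by blast
  next
    fix U assume U: "openin (zariski A) U"
    show "openin (zariski UNIV) {x \<in> topspace (zariski UNIV). x \<inter> A \<in> U}"
    proof (subst openin_subopen, intro ballI)
      fix P assume "P \<in> {x \<in> topspace (zariski UNIV). x \<inter> A \<in> U}"
      then have P: "P \<in> spec UNIV" "P \<inter> A \<in> U" unfolding topspace_zariski by blast+
      obtain c where c: "c \<in> A" "c \<notin> P \<inter> A" "\<forall>Q'\<in>spec A. c \<notin> Q' \<longrightarrow> Q' \<in> U"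
        using nbhd[OF sA U P(2)] by blast
      let ?T = "{Q \<in> spec UNIV. c \<notin> Q}"
      have "openin (zariski UNIV) ?T" by (rule basic_open) simp
      moreover have "P \<in> ?T" using P c by blast
      moreover have "?T \<subseteq> {x \<in> topspace (zariski UNIV). x \<inter> A \<in> U}"
      proof
        fix Q assume Q: "Q \<in> ?T"
        then have "Q \<inter> A \<in> spec A" using contract_prime[OF sA] unfolding spec_def by blast
        moreover have "c \<notin> Q \<inter> A" using Q by blast
        ultimately have "Q \<inter> A \<in> U" using c(3) by blast
        then show "Q \<in> {x \<in> topspace (zariski UNIV). x \<inter> A \<in> U}" using Q unfolding topspace_zariski by blast
      qed
      ultimately show "\<exists>T. openin (zariski UNIV) T \<and> P \<in> T \<and> T \<subseteq> {x \<in> topspace (zariski UNIV). x \<inter> A \<in> U}"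
        by blast
    qed
  qed
  show "continuous_map (min_top UNIV) (min_top A) (\<lambda>P. P \<inter> A)"
    unfolding min_top_def continuous_map_in_subtopology
  proof
    show "continuous_map (subtopology (zariski UNIV) (min_primes UNIV)) (zariski A) (\<lambda>P. P \<inter> A)"
      using continuous_map_from_subtopology[OF cz] .
    show "(\<lambda>P. P \<inter> A) \<in> topspace (subtopology (zariski UNIV) (min_primes UNIV)) \<rightarrow> min_primes A"
      using contract_min[OF d] by auto
  qed
  show "open_map (min_top UNIV) (min_top A) (\<lambda>P. P \<inter> A)"
    unfolding open_map_def
  proof (intro allI impI)
    fix U :: "'a set set" assume "openin (min_top UNIV) U"
    then obtain T where T: "openin (zariski UNIV) T" "U = T \<inter> min_primes UNIV"
      unfolding min_top_def openin_subtopology by blast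
    show "openin (min_top A) ((\<lambda>P. P \<inter> A) ` U)"
    proof (subst openin_subopen, intro ballI)
      fix y assume "y \<in> (\<lambda>P. P \<inter> A) ` U"
      then obtain P where P: "P \<in> U" "y = P \<inter> A" by blast
      have Pm: "P \<in> min_primes UNIV" using P T by blast
      have Pp: "prime_ideal_of UNIV P" using minU(1)[OF Pm] .
      obtain s where s: "s \<notin> P" "\<forall>Q'\<in>spec UNIV. s \<notin> Q' \<longrightarrow> Q' \<in> T"
        using nbhd[OF subring_UNIV T(1)] P T by blast
      obtain a where a: "a \<notin> P" "a * s \<in> A" using dense_prime[OF d Pp s(1)] by blast
      have cP: "a * s \<notin> P" using pU(5)[OF Pp] a s by blast
      define V where "V = {Q \<in> spec A. a * s \<notin> Q} \<inter> min_primes A"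
      have "openin (min_top A) V" unfolding V_def min_top_def openin_subtopology
        using basic_open[OF a(2)] by blast
      moreover have "y \<in> V" unfolding V_def using contract_min[OF d Pm] minU_spec cP P by blast
      moreover have "V \<subseteq> (\<lambda>P. P \<inter> A) ` U"
      proof
        fix Q assume Q: "Q \<in> V"
        then obtain P' where P': "P' \<in> min_primes UNIV" "P' \<inter> A = Q"
          using contract_surj[OF d] unfolding V_def by blast
        have "a * s \<notin> P'" using Q P' a(2) unfolding V_def by blast
        then have "s \<notin> P'" using pU(4)[OF minU(1)[OF P'(1)]] by blast
        then have "P' \<in> T" using s(2) minU_spec[OF P'(1)] by blast
        then have "P' \<in> U" using T P' by blast
        then show "Q \<in> (\<lambda>P. P \<inter> A) ` U" using P' by blast
      qed
      ultimately show "\<exists>T. openin (min_top A) T \<and> y \<in> T \<and> T \<subseteq> (\<lambda>P. P \<inter> A) ` U" by blast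
    qed
  qed
  show "(\<lambda>P. P \<inter> A) ` topspace (min_top UNIV) = topspace (min_top A)"
    unfolding topspace_min using contract_min[OF d] contract_surj[OF d] by blast
  show "inj_on (\<lambda>P. P \<inter> A) (topspace (min_top UNIV))"
    unfolding topspace_min inj_on_def using contract_inj[OF d] by blast
qed


end
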